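(* Let $H$ and $G$ be real Hilbert spaces, $Z$ a nonempty closed convex subset of $H\times G$, $x_0\in H\times G$, $\{\lambda_n\}\subset(0,1]$, and $\{H_n\}$ closed convex subsets of $H\times G$ with $Z\subset H_n$ for all $n$. Consider the iteration: for $n=0,1,\dots$, $x_{n+1/2}=x_n+\lambda_n(P_{H_n}(x_n)-x_n)$ and $x_{n+1}=P_{H(x_0,x_n)\cap C_n}(x_0)$, where $C_0=H(x_0,x_{1/2})$ and, for $n\ge1$, $C_n$ is given by one of: (a) $C_n=H(x_n,x_{n+1/2})\cap H(x_{n-1},x_{(n-1)+1/2})$; (b) $C_n=H(x_n,x_{n+1/2})\cap H(x_0,x_{n-1})$; (c) $C_n=H(x_n,x_{n+1/2})\cap H(x_0,\tau_nx_n+(1-\tau_n)x_{n-1})$ with $\tau_n\in(0,1)$. Then in each case the following hold: 1. $Z\subset H(x_0,x_n)\cap C_n$ for all $n$; 2. $\|x_{n+1}-x_0\|\ge\|x_n-x_0\|$ for all $n$; 3. $\sum_n\|x_{n+1}-x_n\|^2<+\infty$; 4. $\sum_n\|x_{n+1/2}-x_n\|^2<+\infty$; 5. if every weak sequential cluster point of $\{x_n\}$ lies in $Z$, then $x_n\to P_Z(x_0)$ strongly.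
   Context: $H\times G$ has the product Hilbert structure. For $x,y\in H\times G$, $H(x,y):=\{h:\ \langle h-y\mid x-y\rangle\le 0\}$ ($H(x,x)$ is the whole space). $P_D$ is the metric projection onto a nonempty closed convex set $D$. *)

theory Defs
  imports "HOL-Analysis.Analysis"
begin

text \<open>Metric projection onto a set D (for D nonempty closed convex in a real Hilbert
space this is the unique nearest point).  The library's closest_point needs heine_borel.\<close>
definition proj :: "'a::real_inner set \<Rightarrow> 'a \<Rightarrow> 'a" where
  "proj D x = (SOME p. p \<in> D \<and> (\<forall>y\<in>D. norm (x - p) \<le> norm (x - y)))"

definition hspace :: "'a::real_inner \<Rightarrow> 'a \<Rightarrow> 'a set" where
  "hspace x y = {h. inner (h - y) (x - y) \<le> 0}"

definition weak_conv :: "(nat \<Rightarrow> 'a::real_inner) \<Rightarrow> 'a \<Rightarrow> bool" where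
  "weak_conv u z \<longleftrightarrow> (\<forall>y. (\<lambda>j. inner (u j) y) \<longlonglongrightarrow> inner z y)"

definition weak_seq_cluster_point :: "(nat \<Rightarrow> 'a::real_inner) \<Rightarrow> 'a \<Rightarrow> bool" where
  "weak_seq_cluster_point u z \<longleftrightarrow> (\<exists>r. strict_mono r \<and> weak_conv (u \<circ> r) z)"

end

theory Submission
  imports Defs "HOL-Library.Diagonal_Subsequence" "HOL-Library.Infinite_Set"
begin


lemma parallelogram_mid:
  fixes a b x :: "'a::real_inner"
  shows "norm (a - b)^2 = 2*norm(x-a)^2 + 2*norm(x-b)^2 - 4*norm(x - (1/2)*\<^sub>R(a+b))^2"
  by (simp add: power2_norm_eq_inner inner_simps inner_commute algebra_simps)

lemma aux_lin: "(d2::real) \<le> S \<Longrightarrow> P = 2*Q+2*R-4*S \<Longrightarrow> Q \<le> B \<Longrightarrow> R \<le> B \<Longrightarrow> P \<le> 4*(B - d2)"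
  by (simp add: algebra_simps)

lemma proj_exists:
  fixes D :: "'a::{real_inner,complete_space} set"
  assumes ne: "D \<noteq> {}" and cl: "closed D" and cv: "convex D"
  shows "\<exists>p\<in>D. \<forall>y\<in>D. norm (x - p) \<le> norm (x - y)"
proof -
  define d where "d = infdist x D"
  have d0: "0 \<le> d" unfolding d_def by (rule infdist_nonneg)
  have dle: "d \<le> norm (x - y)" if "y \<in> D" for y
    using infdist_le[OF that, of x] by (simp add: d_def dist_norm)
  have ex: "\<exists>y\<in>D. norm (x - y) < d + e" if "e > 0" for e
  proof (rule ccontr)
    assume "\<not> ?thesis"
    then have "\<forall>y\<in>D. d + e \<le> norm (x - y)" by force
    then have "d + e \<le> infdist x D" unfolding infdist_notempty[OF ne]
      by (intro cINF_greatest[OF ne]) (simp add: dist_norm)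
    with that show False by (simp add: d_def)
  qed
  have "\<forall>n. \<exists>y\<in>D. norm (x - y) < d + 1/(Suc n)"
    using ex by simp
  then obtain y where yD: "\<And>n. y n \<in> D" and yd: "\<And>n. norm (x - y n) < d + 1/(Suc n)"
    by metis
  have key: "norm (y m - y n)^2 \<le> 4*(2*d+1)/(Suc N)" if "m \<ge> N" "n \<ge> N" for m n N
  proof -
    have mid: "(1/2) *\<^sub>R (y m + y n) \<in> D"
      using convexD[OF cv yD[of m] yD[of n], of "1/2" "1/2"] by (simp add: scaleR_add_right)
    have e1: "1/real (Suc m) \<le> 1/(Suc N)" "1/real (Suc n) \<le> 1/(Suc N)"
      using that by (auto simp: frac_le)
    have e2: "1/real (Suc N) \<le> 1" by simp
    define b where "b = d + 1/(Suc N)"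
    have "norm (x - y m) \<le> b" "norm (x - y n) \<le> b"
      using yd[of m] yd[of n] e1 by (auto simp: b_def)
    then have s: "norm (x - y m)^2 \<le> b^2" "norm (x - y n)^2 \<le> b^2"
      by (auto intro!: power_mono)
    define S where "S = norm (x - (1/2) *\<^sub>R (y m + y n))^2"
    have "d^2 \<le> S"
      using dle[OF mid] d0 unfolding S_def by (auto intro!: power_mono)
    moreover have "norm (y m - y n)^2 = 2*norm(x-y m)^2 + 2*norm(x-y n)^2 - 4*S"
      using parallelogram_mid[of "y m" "y n" x] unfolding S_def .
    ultimately have "norm (y m - y n)^2 \<le> 4*(b^2 - d^2)"
      using s by (rule aux_lin)
    also have "b^2 - d^2 = (1/(Suc N))*(2*d + 1/(Suc N))"
      by (simp add: b_def power2_eq_square algebra_simps)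
    also have "\<dots> \<le> (1/(Suc N))*(2*d+1)"
      using e2 by (intro mult_left_mono) auto
    finally show ?thesis by simp
  qed
  have "Cauchy y"
  proof (rule metric_CauchyI)
    fix e :: real assume e: "e > 0"
    obtain N where N: "4*(2*d+1)/e^2 < real (Suc N)"
    proof -
      obtain N where "4*(2*d+1)/e^2 < real N" using reals_Archimedean2 by blast
      then show ?thesis using that[of N] by simp
    qed
    have "4*(2*d+1)/(Suc N) < e^2"
      using N e by (simp add: field_simps)
    show "\<exists>M. \<forall>m\<ge>M. \<forall>n\<ge>M. dist (y m) (y n) < e"
    proof (intro exI allI impI)
      fix m n assume "m \<ge> N" "n \<ge> N"
      then have "(dist (y m) (y n))^2 < e^2"
        using key[of N m n] \<open>4*(2*d+1)/(Suc N) < e^2\<close> by (simp add: dist_norm)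
      then show "dist (y m) (y n) < e" using e
        by (rule power2_less_imp_less[OF _ less_imp_le])
    qed
  qed
  then obtain p where p: "y \<longlonglongrightarrow> p" using Cauchy_convergent convergent_def by blast
  have pD: "p \<in> D" using closed_sequentially[OF cl yD p] .
  show ?thesis
  proof (intro bexI[OF _ pD] ballI)
    fix z assume "z \<in> D"
    have lim1: "(\<lambda>n. norm (x - y n)) \<longlonglongrightarrow> norm (x - p)"
      by (intro tendsto_intros p)
    have lim2: "(\<lambda>n. d + 1/real (Suc n)) \<longlonglongrightarrow> d + 0"
      using tendsto_add[OF tendsto_const LIMSEQ_inverse_real_of_nat, of d]
      by (simp add: inverse_eq_divide)
    have "norm (x - p) \<le> d" 
      using LIMSEQ_le[OF lim1 lim2] yd less_imp_le by auto
    then show "norm (x - p) \<le> norm (x - z)" using dle[OF \<open>z \<in> D\<close>] by simp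
  qed
qed



lemma proj_in:
  fixes D :: "'a::{real_inner,complete_space} set"
  assumes "D \<noteq> {}" "closed D" "convex D"
  shows "proj D x \<in> D \<and> (\<forall>y\<in>D. norm (x - proj D x) \<le> norm (x - y))"
proof -
  have ex: "\<exists>p. p \<in> D \<and> (\<forall>y\<in>D. norm (x - p) \<le> norm (x - y))"
    using proj_exists[OF assms, of x] by blast
  show ?thesis unfolding proj_def by (rule someI_ex[OF ex])
qed

lemma norm_diff_scale:
  fixes u v :: "'a::real_inner"
  shows "norm (u - t *\<^sub>R v)^2 = norm u^2 - 2*t*inner v u + t^2 * norm v^2"
  unfolding power2_norm_eq_inner
  by (simp add: inner_diff_left inner_diff_right inner_commute[of u v] power2_eq_square algebra_simps)

lemma min_imp_var:
  fixes D :: "'a::real_inner set"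
  assumes cv: "convex D" and pD: "p \<in> D" and mn: "\<forall>y\<in>D. norm (x - p) \<le> norm (x - y)"
    and yD: "y \<in> D"
  shows "inner (y - p) (x - p) \<le> 0"
proof (rule ccontr)
  assume nt: "\<not> ?thesis"
  define a where "a = inner (y - p) (x - p)"
  define c where "c = norm (y - p)^2"
  have a: "a > 0" using nt a_def by simp
  have c: "c > 0"
  proof -
    have "y \<noteq> p" using a a_def by auto
    then show ?thesis by (simp add: c_def)
  qed
  define t where "t = min 1 (a / c)"
  have t0: "0 < t" "t \<le> 1" using a c by (auto simp: t_def)
  have tc: "t * c \<le> a" using c by (auto simp: t_def min_def field_simps)
  have "(1 - t) *\<^sub>R p + t *\<^sub>R y \<in> D" using convexD[OF cv pD yD] t0 by simp
  also have "(1 - t) *\<^sub>R p + t *\<^sub>R y = p + t *\<^sub>R (y - p)" by (simp add: algebra_simps)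
  finally have inD: "p + t *\<^sub>R (y - p) \<in> D" .
  have eq: "norm (x - (p + t *\<^sub>R (y - p)))^2 = norm (x - p)^2 - 2*t*a + t^2 * c"
    unfolding a_def c_def using norm_diff_scale[of "x - p" t "y - p"] by (simp add: algebra_simps)
  have "t^2 * c = t * (t * c)" by (simp add: power2_eq_square)
  also have "\<dots> \<le> t * a" using tc t0 by (intro mult_left_mono) auto
  finally have "norm (x - (p + t *\<^sub>R (y - p)))^2 < norm (x - p)^2"
    using eq mult_pos_pos[OF t0(1) a] by linarith
  moreover have "norm (x - p)^2 \<le> norm (x - (p + t *\<^sub>R (y - p)))^2"
    using mn inD by (auto intro!: power_mono)
  ultimately show False by simp
qed

lemma var_unique:
  fixes p q x :: "'a::real_inner"
  assumes "inner (q - p) (x - p) \<le> 0" "inner (p - q) (x - q) \<le> 0"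
  shows "p = q"
proof -
  have "inner (q - p) (x - p) + inner (p - q) (x - q) = norm (q - p)^2"
    by (simp add: power2_norm_eq_inner inner_diff_left inner_diff_right inner_commute algebra_simps)
  then have "norm (q - p)^2 \<le> 0" using assms by linarith
  then show ?thesis by simp
qed

lemma proj_var:
  fixes D :: "'a::{real_inner,complete_space} set"
  assumes "D \<noteq> {}" "closed D" "convex D" "y \<in> D"
  shows "inner (y - proj D x) (x - proj D x) \<le> 0"
  using proj_in[OF assms(1-3), of x] min_imp_var[OF assms(3) _ _ assms(4)] by blast

lemma proj_unique_min:
  fixes D :: "'a::{real_inner,complete_space} set"
  assumes "D \<noteq> {}" "closed D" "convex D" "y \<in> D" "norm (x - y) \<le> norm (x - proj D x)"
  shows "y = proj D x"
proof -
  have P: "proj D x \<in> D" "\<forall>z\<in>D. norm (x - proj D x) \<le> norm (x - z)" using proj_in[OF assms(1-3)] by auto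
  have "\<forall>z\<in>D. norm (x - y) \<le> norm (x - z)" using P assms(5) by force
  then have "inner (proj D x - y) (x - y) \<le> 0" using min_imp_var[OF assms(3) assms(4)] P by blast
  moreover have "inner (y - proj D x) (x - proj D x) \<le> 0" by (rule proj_var[OF assms(1-4)])
  ultimately show ?thesis using var_unique[of y "proj D x" x] by simp
qed



lemma proj_subspace_orth:
  fixes V :: "'a::{real_inner,complete_space} set"
  assumes "closed V" "subspace V" "v \<in> V"
  shows "inner v (y - proj V y) = 0"
proof -
  have ne: "V \<noteq> {}" using assms(3) by auto
  have cv: "convex V" using assms(2) by (rule subspace_imp_convex)
  define q where "q = proj V y"
  have qV: "q \<in> V" using proj_in[OF ne assms(1) cv] q_def by auto
  have "q + v \<in> V" "q - v \<in> V" using qV assms(2,3) by (auto intro: subspace_add subspace_diff)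
  then have "inner ((q + v) - q) (y - q) \<le> 0" "inner ((q - v) - q) (y - q) \<le> 0"
    using proj_var[OF ne assms(1) cv] unfolding q_def by blast+
  then show ?thesis unfolding q_def[symmetric] by (simp add: inner_diff_left)
qed

lemma riesz:
  fixes f :: "'a::{real_inner,complete_space} \<Rightarrow> real"
  assumes bl: "bounded_linear f"
  shows "\<exists>z. \<forall>y. f y = inner z y"
proof (cases "\<forall>y. f y = 0")
  case True then show ?thesis by (intro exI[of _ 0]) simp
next
  case False
  then obtain w where w: "f w \<noteq> 0" by auto
  interpret f: bounded_linear f by (rule bl)
  define N where "N = {y. f y = 0}"
  have clN: "closed N" unfolding N_def
    by (intro closed_Collect_eq linear_continuous_on bl continuous_on_const)
  have subN: "subspace N" unfolding N_def subspace_def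
    by (auto simp: f.add f.scaleR f.zero)
  define w' where "w' = w - proj N w"
  have fq: "f (proj N w) = 0"
  proof -
    have "N \<noteq> {}" using subspace_0[OF subN] by auto
    then have "proj N w \<in> N" using proj_in[of N w] clN subspace_imp_convex[OF subN] by blast
    then show ?thesis by (simp add: N_def)
  qed
  have fw': "f w' = f w" unfolding w'_def using fq by (simp add: f.diff)
  have orth: "inner n w' = 0" if "n \<in> N" for n
    unfolding w'_def by (rule proj_subspace_orth[OF clN subN that])
  show ?thesis
  proof (intro exI allI)
    fix y
    have "y - (f y / f w') *\<^sub>R w' \<in> N"
      using w fw' by (simp add: N_def f.diff f.scaleR)
    then have "inner (y - (f y / f w') *\<^sub>R w') w' = 0" by (rule orth)
    then have e: "inner y w' = (f y / f w') * inner w' w'" by (simp add: inner_diff_left)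
    have "w' \<noteq> 0" using w fw' f.zero by auto
    then have nz: "inner w' w' \<noteq> 0" by simp
    show "f y = inner ((f w' / inner w' w') *\<^sub>R w') y"
      using e nz w fw' by (simp add: inner_commute[of w' y] field_simps)
  qed
qed

lemma diag_inner:
  fixes u :: "nat \<Rightarrow> 'a::real_inner"
  assumes bd: "\<And>n. norm (u n) \<le> M"
  shows "\<exists>r. strict_mono r \<and> (\<forall>k. convergent (\<lambda>j. inner (u (r j)) (u k)))"
proof -
  define P where "P = (\<lambda>k (s::nat\<Rightarrow>nat). convergent (\<lambda>j. inner (u (s j)) (u k)))"
  have bd2: "norm (inner (u i) (u k)) \<le> M * M" for i k
  proof -
    have "norm (inner (u i) (u k)) \<le> norm (u i) * norm (u k)" using Cauchy_Schwarz_ineq2 by simp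
    also have "\<dots> \<le> M * M" using bd order_trans[OF norm_ge_zero bd] by (intro mult_mono) auto
    finally show ?thesis .
  qed
  interpret subseqs P
  proof
    fix k and s :: "nat \<Rightarrow> nat" assume "strict_mono s"
    obtain r' where r': "strict_mono r'" "monoseq (\<lambda>j. inner (u (s (r' j))) (u k))"
      using seq_monosub[of "\<lambda>j. inner (u (s j)) (u k)"] by auto
    have "convergent (\<lambda>j. inner (u (s (r' j))) (u k))"
      by (rule Bseq_monoseq_convergent[OF BseqI'[OF bd2] r'(2)])
    then show "\<exists>r'. strict_mono r' \<and> P k (s \<circ> r')" using r' by (auto simp: P_def o_def)
  qed
  have stable: "P n (s \<circ> r)" if "strict_mono r" "P n s" for r s n
    using convergent_subseq_convergent[OF that(2)[unfolded P_def] that(1)] by (simp add: P_def o_def)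
  show ?thesis
  proof (intro exI conjI allI)
    show "strict_mono diagseq" by (rule subseq_diagseq)
    fix k
    have "P k (diagseq \<circ> (+) (Suc k))" by (rule diagseq_holds[OF stable])
    then have "convergent (\<lambda>j. inner (u (diagseq (j + Suc k))) (u k))"
      by (simp add: P_def o_def add.commute)
    then show "convergent (\<lambda>j. inner (u (diagseq j)) (u k))"
      by (rule convergent_ignore_initial_segment[THEN iffD1])
  qed
qed



lemma inner_bound_M:
  fixes a y :: "'a::real_inner"
  assumes "norm a \<le> M"
  shows "\<bar>inner a y\<bar> \<le> M * norm y"
proof -
  have "\<bar>inner a y\<bar> \<le> norm a * norm y" by (rule Cauchy_Schwarz_ineq2)
  also have "\<dots> \<le> M * norm y" using assms by (intro mult_right_mono) auto
  finally show ?thesis .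
qed

lemma weak_compact:
  fixes u :: "nat \<Rightarrow> 'a::{real_inner,complete_space}"
  assumes bd: "\<And>n. norm (u n) \<le> M"
  shows "\<exists>r z. strict_mono r \<and> weak_conv (u \<circ> r) z"
proof -
  obtain r where r: "strict_mono r" and conv: "\<And>k. convergent (\<lambda>j. inner (u (r j)) (u k))"
    using diag_inner[of u M] bd by blast
  have M0: "0 \<le> M" using order_trans[OF norm_ge_zero bd] .
  define W where "W = {y. convergent (\<lambda>j. inner (u (r j)) y)}"
  have add: "convergent (\<lambda>j. inner (u (r j)) (x + y))"
    if "convergent (\<lambda>j. inner (u (r j)) x)" "convergent (\<lambda>j. inner (u (r j)) y)" for x y
    unfolding inner_add_right using that by (rule convergent_add)
  have scl: "convergent (\<lambda>j. inner (u (r j)) (c *\<^sub>R x))"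
    if cx: "convergent (\<lambda>j. inner (u (r j)) x)" for c x
  proof -
    obtain L where "(\<lambda>j. inner (u (r j)) x) \<longlonglongrightarrow> L" using cx by (auto simp: convergent_def)
    then have "(\<lambda>j. c * inner (u (r j)) x) \<longlonglongrightarrow> c * L" by (rule tendsto_mult_left)
    then show ?thesis by (auto simp: convergent_def)
  qed
  have subW: "subspace W" unfolding subspace_def W_def
    using add scl convergent_const[of "0::real"] by auto
  have clW: "closed W"
  proof -
    have "closure W \<subseteq> W"
    proof
      fix y assume y: "y \<in> closure W"
      have "Cauchy (\<lambda>j. inner (u (r j)) y)"
      proof (rule metric_CauchyI)
        fix e :: real assume e: "0 < e"
        define d where "d = e / (3 * (M + 1))"
        have d0: "0 < d" using e M0 by (simp add: d_def)
        obtain s where sW: "s \<in> W" and ds: "dist s y < d"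
          using y d0 unfolding closure_approachable by blast
        have "Cauchy (\<lambda>j. inner (u (r j)) s)" using sW by (simp add: W_def convergent_Cauchy)
        then obtain N where N: "\<And>m n. m \<ge> N \<Longrightarrow> n \<ge> N \<Longrightarrow> dist (inner (u (r m)) s) (inner (u (r n)) s) < e/3"
          using metric_CauchyD[of _ "e/3"] e by force
        have Md: "M * norm (y - s) \<le> e / 3"
        proof -
          have "M * norm (y - s) \<le> M * d" using ds M0 by (intro mult_left_mono) (auto simp: dist_norm norm_minus_commute)
          also have "M * d \<le> e / 3" using e M0 by (simp add: d_def field_simps)
          finally show ?thesis .
        qed
        show "\<exists>N. \<forall>m\<ge>N. \<forall>n\<ge>N. dist (inner (u (r m)) y) (inner (u (r n)) y) < e"
        proof (intro exI allI impI)
          fix m n assume mn: "m \<ge> N" "n \<ge> N"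
          have eq: "inner (u (r m)) y - inner (u (r n)) y =
              inner (u (r m)) (y - s) + (inner (u (r m)) s - inner (u (r n)) s) - inner (u (r n)) (y - s)"
            by (simp add: inner_diff_right)
          have b1: "\<bar>inner (u (r m)) (y - s)\<bar> \<le> e/3" using inner_bound_M[OF bd] Md order_trans by blast
          have b2: "\<bar>inner (u (r n)) (y - s)\<bar> \<le> e/3" using inner_bound_M[OF bd] Md order_trans by blast
          have b3: "\<bar>inner (u (r m)) s - inner (u (r n)) s\<bar> < e/3" using N[OF mn] by (simp add: dist_real_def)
          show "dist (inner (u (r m)) y) (inner (u (r n)) y) < e"
            unfolding dist_real_def eq using b1 b2 b3 by linarith
        qed
      qed
      then show "y \<in> W" unfolding W_def by (simp add: real_Cauchy_convergent)
    qed
    then show ?thesis by (simp add: closure_subset_eq)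
  qed
  have allW: "y \<in> W" for y
  proof -
    define q where "q = proj W y"
    have qW: "q \<in> W" using proj_in[of W y] clW subspace_imp_convex[OF subW] subspace_0[OF subW] q_def by blast
    have "inner (u k) (y - q) = 0" for k
      unfolding q_def by (rule proj_subspace_orth[OF clW subW]) (simp add: W_def conv)
    then have "inner (u (r j)) y = inner (u (r j)) q" for j by (simp add: inner_diff_right)
    then show ?thesis using qW by (simp add: W_def)
  qed
  define f where "f y = lim (\<lambda>j. inner (u (r j)) y)" for y
  have lim: "(\<lambda>j. inner (u (r j)) y) \<longlonglongrightarrow> f y" for y
    using allW[of y] unfolding W_def f_def by (simp add: convergent_LIMSEQ_iff)
  have bl: "bounded_linear f"
  proof (rule bounded_linear_intro[where K=M])
    fix x y
    have "(\<lambda>j. inner (u (r j)) (x + y)) \<longlonglongrightarrow> f x + f y"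
      unfolding inner_add_right by (intro tendsto_add lim)
    then show "f (x + y) = f x + f y" using lim LIMSEQ_unique by blast
  next
    fix c x
    have "(\<lambda>j. inner (u (r j)) (c *\<^sub>R x)) \<longlonglongrightarrow> c * f x"
      unfolding inner_scaleR_right by (intro tendsto_mult_left lim)
    moreover have "(\<lambda>j. inner (u (r j)) (c *\<^sub>R x)) \<longlonglongrightarrow> f (c *\<^sub>R x)" by (rule lim)
    ultimately show "f (c *\<^sub>R x) = c *\<^sub>R f x" using LIMSEQ_unique by auto
  next
    fix x
    have "(\<lambda>j. \<bar>inner (u (r j)) x\<bar>) \<longlonglongrightarrow> \<bar>f x\<bar>" by (intro tendsto_rabs lim)
    moreover have "\<forall>j. \<bar>inner (u (r j)) x\<bar> \<le> M * norm x" using inner_bound_M[OF bd] by blast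
    ultimately have "\<bar>f x\<bar> \<le> M * norm x"
      using LIMSEQ_le_const2 by blast
    then show "norm (f x) \<le> norm x * M" by (simp add: mult.commute)
  qed
  obtain z where z: "\<And>y. f y = inner z y" using riesz[OF bl] by blast
  have "weak_conv (u \<circ> r) z" unfolding weak_conv_def using lim z by (simp add: o_def)
  then show ?thesis using r by blast
qed



lemma hspace_eq: "hspace a b = {h. inner (a - b) h \<le> inner (a - b) b}"
  by (auto simp: hspace_def inner_diff_left inner_commute)

lemma hspace_closed: "closed (hspace a b)"
  unfolding hspace_eq by (rule closed_halfspace_le)

lemma hspace_convex: "convex (hspace a b)"
  unfolding hspace_eq by (rule convex_halfspace_le)

lemma hspace_self: "hspace a a = UNIV"
  by (auto simp: hspace_def)

lemma mem_hspace: "h \<in> hspace a b \<longleftrightarrow> inner (h - b) (a - b) \<le> 0"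
  by (simp add: hspace_def)

lemma inner_expand2:
  fixes c v :: "'a::real_inner"
  shows "inner (c - s *\<^sub>R v) (e - t *\<^sub>R v) = inner c e - t * inner c v - s * inner v e + s * t * inner v v"
  by (simp add: inner_diff_left inner_diff_right algebra_simps)

lemma half_lemma:
  fixes z p x :: "'a::real_inner"
  assumes "inner (z - p) (x - p) \<le> 0" "0 < l" "l \<le> 1"
  shows "z \<in> hspace x (x + l *\<^sub>R (p - x))"
proof -
  define c where "c = z - p"
  define v where "v = x - p"
  have 1: "z - (x + l *\<^sub>R (p - x)) = c - (1 - l) *\<^sub>R v" by (simp add: c_def v_def algebra_simps)
  have 2: "x - (x + l *\<^sub>R (p - x)) = 0 - (-l) *\<^sub>R v" by (simp add: v_def algebra_simps)
  have e: "inner (z - (x + l *\<^sub>R (p - x))) (x - (x + l *\<^sub>R (p - x)))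
        = l * inner c v - l * (1 - l) * inner v v"
    unfolding 1 2 inner_expand2 by (simp add: algebra_simps)
  have "l * inner c v \<le> 0" using assms by (simp add: mult_nonneg_nonpos c_def v_def)
  moreover have "0 \<le> l * (1 - l) * inner v v" using assms by simp
  ultimately show ?thesis unfolding mem_hspace e by linarith
qed

lemma convex_hspace_lemma:
  fixes z a b x0 :: "'a::real_inner"
  assumes "z \<in> hspace x0 a" "z \<in> hspace x0 b" "0 \<le> t" "t \<le> 1"
  shows "z \<in> hspace x0 (t *\<^sub>R a + (1 - t) *\<^sub>R b)"
proof -
  define u1 where "u1 = z - b"
  define u2 where "u2 = x0 - b"
  define d where "d = a - b"
  have w1: "z - (t *\<^sub>R a + (1 - t) *\<^sub>R b) = u1 - t *\<^sub>R d" "x0 - (t *\<^sub>R a + (1 - t) *\<^sub>R b) = u2 - t *\<^sub>R d"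
    by (simp_all add: u1_def u2_def d_def algebra_simps)
  have a1: "z - a = u1 - 1 *\<^sub>R d" "x0 - a = u2 - 1 *\<^sub>R d" by (simp_all add: u1_def u2_def d_def)
  have b1: "z - b = u1 - 0 *\<^sub>R d" "x0 - b = u2 - 0 *\<^sub>R d" by (simp_all add: u1_def u2_def)
  have Fa: "inner u1 u2 - inner u1 d - inner d u2 + inner d d \<le> 0"
    using assms(1) unfolding mem_hspace a1 inner_expand2 by simp
  have Fb: "inner u1 u2 \<le> 0"
    using assms(2) unfolding mem_hspace b1 inner_expand2 by simp
  have dd: "0 \<le> inner d d" by simp
  have "inner u1 u2 - t * inner u1 d - t * inner d u2 + t * t * inner d d
      = t * (inner u1 u2 - inner u1 d - inner d u2 + inner d d) + (1 - t) * inner u1 u2 - t * (1 - t) * inner d d"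
    by (simp add: algebra_simps)
  also have "\<dots> \<le> 0"
  proof -
    have "t * (inner u1 u2 - inner u1 d - inner d u2 + inner d d) \<le> 0" using Fa assms(3) by (simp add: mult_nonneg_nonpos)
    moreover have "(1 - t) * inner u1 u2 \<le> 0" using Fb assms(4) by (simp add: mult_nonneg_nonpos)
    moreover have "0 \<le> t * (1 - t) * inner d d" using dd assms(3,4) by simp
    ultimately show ?thesis by linarith
  qed
  finally show ?thesis unfolding mem_hspace w1 inner_expand2 .
qed

lemma norm_sq_split:
  fixes a b :: "'a::real_inner"
  shows "norm (a + b)^2 = norm a^2 + 2 * inner a b + norm b^2"
  unfolding power2_norm_eq_inner
  by (simp add: inner_add_left inner_add_right inner_commute[of b a])

lemma subseq_of_not_tendsto:
  fixes x :: "nat \<Rightarrow> 'a::metric_space"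
  assumes "\<not> x \<longlonglongrightarrow> p"
  shows "\<exists>e>0. \<exists>r::nat\<Rightarrow>nat. strict_mono r \<and> (\<forall>j. e \<le> dist (x (r j)) p)"
proof -
  have "\<exists>e>0. \<forall>N. \<exists>n\<ge>N. e \<le> dist (x n) p"
  proof (rule ccontr)
    assume na: "\<not> (\<exists>e>0. \<forall>N. \<exists>n\<ge>N. e \<le> dist (x n) p)"
    have "\<forall>e>0. \<exists>N. \<forall>n\<ge>N. dist (x n) p < e"
    proof (intro allI impI)
      fix e :: real assume "e > 0"
      then have "\<not> (\<forall>N. \<exists>n\<ge>N. e \<le> dist (x n) p)" using na by blast
      then obtain N where "\<forall>n\<ge>N. \<not> e \<le> dist (x n) p" by blast
      then show "\<exists>N. \<forall>n\<ge>N. dist (x n) p < e" by (auto simp: not_le)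
    qed
    then have "x \<longlonglongrightarrow> p" unfolding LIMSEQ_def .
    with assms show False by contradiction
  qed
  then obtain e where e: "e > 0" "\<forall>N. \<exists>n\<ge>N. e \<le> dist (x n) p" by blast
  have "infinite {n. e \<le> dist (x n) p}"
    unfolding infinite_nat_iff_unbounded_le using e(2) by blast
  from infinite_enumerate[OF this] obtain r :: "nat \<Rightarrow> nat" where "strict_mono r" "\<forall>j. e \<le> dist (x (r j)) p"
    by auto
  then show ?thesis using e(1) by auto
qed


theorem proposition8:
  fixes Z :: "('h::{real_inner,complete_space} \<times> 'g::{real_inner,complete_space}) set"
    and x0 :: "'h \<times> 'g"
    and lam :: "nat \<Rightarrow> real"
    and Hs C :: "nat \<Rightarrow> ('h \<times> 'g) set"
    and x xh :: "nat \<Rightarrow> 'h \<times> 'g"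
  assumes Z: "Z \<noteq> {}" "closed Z" "convex Z"
    and lam: "\<And>n. 0 < lam n \<and> lam n \<le> 1"
    and Hs: "\<And>n. closed (Hs n) \<and> convex (Hs n) \<and> Z \<subseteq> Hs n"
    and x0: "x 0 = x0"
    and half: "\<And>n. xh n = x n + lam n *\<^sub>R (proj (Hs n) (x n) - x n)"
    and step: "\<And>n. x (Suc n) = proj (hspace x0 (x n) \<inter> C n) x0"
    and C0: "C 0 = hspace x0 (xh 0)"
    and Ccases:
      "(\<forall>n\<ge>1. C n = hspace (x n) (xh n) \<inter> hspace (x (n - 1)) (xh (n - 1)))
       \<or> (\<forall>n\<ge>1. C n = hspace (x n) (xh n) \<inter> hspace x0 (x (n - 1)))
       \<or> (\<exists>\<tau>::nat \<Rightarrow> real. (\<forall>n\<ge>1. 0 < \<tau> n \<and> \<tau> n < 1) \<and>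
            (\<forall>n\<ge>1. C n = hspace (x n) (xh n) \<inter>
                        hspace x0 (\<tau> n *\<^sub>R x n + (1 - \<tau> n) *\<^sub>R x (n - 1))))"
  shows "(\<forall>n. Z \<subseteq> hspace x0 (x n) \<inter> C n)
    \<and> (\<forall>n. norm (x (Suc n) - x0) \<ge> norm (x n - x0))
    \<and> summable (\<lambda>n. (norm (x (Suc n) - x n))\<^sup>2)
    \<and> summable (\<lambda>n. (norm (xh n - x n))\<^sup>2)
    \<and> ((\<forall>z. weak_seq_cluster_point x z \<longrightarrow> z \<in> Z) \<longrightarrow> x \<longlonglongrightarrow> proj Z x0)"
proof -
  have Hne: "Hs n \<noteq> {}" for n using Hs[of n] Z(1) by blast
  have Hcl: "closed (Hs n)" and Hcv: "convex (Hs n)" for n using Hs by auto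
  have HZ: "Z \<subseteq> hspace (x n) (xh n)" for n
  proof
    fix z assume "z \<in> Z"
    then have "z \<in> Hs n" using Hs by blast
    then have "inner (z - proj (Hs n) (x n)) (x n - proj (Hs n) (x n)) \<le> 0"
      by (rule proj_var[OF Hne Hcl Hcv])
    from half_lemma[OF this conjunct1[OF lam[of n]] conjunct2[OF lam[of n]]]
    show "z \<in> hspace (x n) (xh n)" by (simp only: half)
  qed
  have Csub: "C n \<subseteq> hspace (x n) (xh n)" for n
  proof (cases "n = 0")
    case True then show ?thesis using C0 x0 by simp
  next
    case False then have "n \<ge> 1" by simp
    then show ?thesis using Ccases by auto
  qed
  have ZC: "Z \<subseteq> C n" if n1: "n \<ge> 1" and A1: "Z \<subseteq> hspace x0 (x n)" and A2: "Z \<subseteq> hspace x0 (x (n - 1))" for n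
  proof -
    have "Z \<subseteq> hspace (x (n - 1)) (xh (n - 1))" by (rule HZ)
    moreover have "Z \<subseteq> hspace (x n) (xh n)" by (rule HZ)
    moreover have "Z \<subseteq> hspace x0 (t *\<^sub>R x n + (1 - t) *\<^sub>R x (n - 1))" if "0 < t" "t < 1" for t
      using convex_hspace_lemma[of _ x0 "x n" "x (n - 1)" t] A1 A2 that by auto
    ultimately have T: "Z \<subseteq> hspace (x (n - 1)) (xh (n - 1))" "Z \<subseteq> hspace (x n) (xh n)"
      "\<And>t. 0 < t \<Longrightarrow> t < 1 \<Longrightarrow> Z \<subseteq> hspace x0 (t *\<^sub>R x n + (1 - t) *\<^sub>R x (n - 1))" by auto
    show ?thesis
      using Ccases
    proof (elim disjE exE conjE)
      assume "\<forall>n\<ge>1. C n = hspace (x n) (xh n) \<inter> hspace (x (n - 1)) (xh (n - 1))"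
      then have "C n = hspace (x n) (xh n) \<inter> hspace (x (n - 1)) (xh (n - 1))" using n1 by blast
      then show ?thesis using T by simp
    next
      assume "\<forall>n\<ge>1. C n = hspace (x n) (xh n) \<inter> hspace x0 (x (n - 1))"
      then have "C n = hspace (x n) (xh n) \<inter> hspace x0 (x (n - 1))" using n1 by blast
      then show ?thesis using T A2 by simp
    next
      fix \<tau> :: "nat \<Rightarrow> real"
      assume t1: "\<forall>n\<ge>1. 0 < \<tau> n \<and> \<tau> n < 1"
        and "\<forall>n\<ge>1. C n = hspace (x n) (xh n) \<inter> hspace x0 (\<tau> n *\<^sub>R x n + (1 - \<tau> n) *\<^sub>R x (n - 1))"
      then have "C n = hspace (x n) (xh n) \<inter> hspace x0 (\<tau> n *\<^sub>R x n + (1 - \<tau> n) *\<^sub>R x (n - 1))" using n1 by blast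
      moreover have "0 < \<tau> n" "\<tau> n < 1" using t1 n1 by auto
      ultimately show ?thesis using T(2) T(3)[of "\<tau> n"] by simp
    qed
  qed
  have Cclcv: "closed (C n) \<and> convex (C n)" for n
  proof (cases "n = 0")
    case True then show ?thesis using C0 by (simp add: hspace_closed hspace_convex)
  next
    case False then have n1: "n \<ge> 1" by simp
    show ?thesis
      using Ccases
    proof (elim disjE exE conjE)
      assume "\<forall>n\<ge>1. C n = hspace (x n) (xh n) \<inter> hspace (x (n - 1)) (xh (n - 1))"
      then show ?thesis using n1 by (simp add: closed_Int convex_Int hspace_closed hspace_convex)
    next
      assume "\<forall>n\<ge>1. C n = hspace (x n) (xh n) \<inter> hspace x0 (x (n - 1))"
      then show ?thesis using n1 by (simp add: closed_Int convex_Int hspace_closed hspace_convex)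
    next
      fix \<tau> :: "nat \<Rightarrow> real"
      assume "\<forall>n\<ge>1. C n = hspace (x n) (xh n) \<inter> hspace x0 (\<tau> n *\<^sub>R x n + (1 - \<tau> n) *\<^sub>R x (n - 1))"
      then show ?thesis using n1 by (simp add: closed_Int convex_Int hspace_closed hspace_convex)
    qed
  qed
  have ZD: "Z \<subseteq> hspace x0 (x n) \<and> Z \<subseteq> C n" for n
  proof (induction n)
    case 0
    show ?case using HZ[of 0] C0 x0 by (simp add: hspace_self)
  next
    case (Suc n)
    define D where "D = hspace x0 (x n) \<inter> C n"
    have ZsD: "Z \<subseteq> D" using Suc.IH D_def by auto
    have Dne: "D \<noteq> {}" using ZsD Z(1) by blast
    have Dcl: "closed D" unfolding D_def using Cclcv by (intro closed_Int hspace_closed) auto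
    have Dcv: "convex D" unfolding D_def using Cclcv by (intro convex_Int hspace_convex) auto
    have A: "Z \<subseteq> hspace x0 (x (Suc n))"
    proof
      fix z assume "z \<in> Z"
      then have "z \<in> D" using ZsD by blast
      from proj_var[OF Dne Dcl Dcv this, of x0]
      show "z \<in> hspace x0 (x (Suc n))" unfolding mem_hspace step D_def .
    qed
    have "Z \<subseteq> C (Suc n)" using ZC[of "Suc n"] A Suc.IH by simp
    then show ?case using A by simp
  qed
  define D where "D n = hspace x0 (x n) \<inter> C n" for n
  have ZsD: "Z \<subseteq> D n" for n using ZD D_def by auto
  have Dne: "D n \<noteq> {}" for n using ZsD Z(1) by blast
  have Dcl: "closed (D n)" for n unfolding D_def using Cclcv by (intro closed_Int hspace_closed) auto
  have Dcv: "convex (D n)" for n unfolding D_def using Cclcv by (intro convex_Int hspace_convex) auto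
  have xS: "x (Suc n) = proj (D n) x0" for n using step D_def by simp
  have xD: "x (Suc n) \<in> D n" and xmin: "\<forall>y\<in>D n. norm (x0 - x (Suc n)) \<le> norm (x0 - y)" for n
    using proj_in[OF Dne Dcl Dcv, of n x0] xS by auto
  have key: "norm (x n - x0)^2 + norm (x (Suc n) - x n)^2 \<le> norm (x (Suc n) - x0)^2" for n
  proof -
    have "x (Suc n) \<in> hspace x0 (x n)" using xD[of n] D_def by auto
    then have i: "inner (x (Suc n) - x n) (x0 - x n) \<le> 0" by (simp add: mem_hspace)
    have "x (Suc n) - x0 = (x (Suc n) - x n) + (x n - x0)" by simp
    then have "norm (x (Suc n) - x0)^2 = norm (x (Suc n) - x n)^2 + 2 * inner (x (Suc n) - x n) (x n - x0) + norm (x n - x0)^2"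
      using norm_sq_split[of "x (Suc n) - x n" "x n - x0"] by simp
    moreover have "inner (x (Suc n) - x n) (x n - x0) = - inner (x (Suc n) - x n) (x0 - x n)"
      by (simp add: inner_diff_right)
    ultimately show ?thesis using i by linarith
  qed
  have claim2: "norm (x (Suc n) - x0) \<ge> norm (x n - x0)" for n
  proof -
    have "0 \<le> norm (x (Suc n) - x n)^2" by simp
    then have "norm (x n - x0)^2 \<le> norm (x (Suc n) - x0)^2" using key[of n] by linarith
    then show ?thesis by (rule power2_le_imp_le) simp
  qed
  have claim1: "Z \<subseteq> hspace x0 (x n) \<inter> C n" for n using ZD by auto
  define p where "p = proj Z x0"
  have pZ: "p \<in> Z" using proj_in[OF Z, of x0] p_def by auto
  define d where "d = norm (x0 - p)"
  have bnd: "norm (x n - x0) \<le> d" for n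
  proof (cases n)
    case 0 then show ?thesis using x0 by (simp add: d_def)
  next
    case (Suc m)
    have "p \<in> D m" using pZ ZsD by blast
    then show ?thesis using xmin[of m] Suc by (auto simp: d_def norm_minus_commute)
  qed
  define g where "g n = norm (x n - x0)^2" for n
  have ginc: "g n \<le> g (Suc n)" for n
  proof -
    have "0 \<le> norm (x (Suc n) - x n)^2" by simp
    then show ?thesis using key[of n] unfolding g_def by linarith
  qed
  have gbd: "norm (g n) \<le> d^2" for n unfolding g_def using bnd[of n] by (simp add: power_mono)
  have "convergent g"
    by (rule Bseq_monoseq_convergent[OF BseqI'[OF gbd]]) (simp add: monoseq_Suc ginc)
  then obtain c where "g \<longlonglongrightarrow> c" by (auto simp: convergent_def)
  then have tel: "summable (\<lambda>n. g (Suc n) - g n)" by (rule telescope_summable)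
  have claim3: "summable (\<lambda>n. (norm (x (Suc n) - x n))\<^sup>2)"
  proof (rule summable_comparison_test'[OF tel])
    fix n
    show "norm ((norm (x (Suc n) - x n))\<^sup>2) \<le> g (Suc n) - g n" using key[of n] by (simp add: g_def)
  qed
  have claim4: "summable (\<lambda>n. (norm (xh n - x n))\<^sup>2)"
  proof (rule summable_comparison_test'[OF claim3])
    fix n
    have "x (Suc n) \<in> hspace (x n) (xh n)" using xD[of n] Csub[of n] D_def by auto
    then have i: "inner (x (Suc n) - xh n) (x n - xh n) \<le> 0" by (simp add: mem_hspace)
    have "x (Suc n) - x n = (x (Suc n) - xh n) + (xh n - x n)" by simp
    then have "norm (x (Suc n) - x n)^2 = norm (x (Suc n) - xh n)^2 + 2 * inner (x (Suc n) - xh n) (xh n - x n) + norm (xh n - x n)^2"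
      using norm_sq_split[of "x (Suc n) - xh n" "xh n - x n"] by simp
    moreover have "inner (x (Suc n) - xh n) (xh n - x n) = - inner (x (Suc n) - xh n) (x n - xh n)"
      by (simp add: inner_diff_right)
    moreover have "0 \<le> norm (x (Suc n) - xh n)^2" by simp
    ultimately have "(norm (xh n - x n))\<^sup>2 \<le> (norm (x (Suc n) - x n))\<^sup>2" using i by linarith
    then show "norm ((norm (xh n - x n))\<^sup>2) \<le> (norm (x (Suc n) - x n))\<^sup>2" by simp
  qed
  have claim5: "x \<longlonglongrightarrow> p" if H: "\<forall>z. weak_seq_cluster_point x z \<longrightarrow> z \<in> Z"
  proof (rule ccontr)
    assume "\<not> x \<longlonglongrightarrow> p"
    from subseq_of_not_tendsto[OF this] obtain e and r :: "nat \<Rightarrow> nat"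
      where e: "e > 0" and r: "strict_mono r" and far: "\<And>j. e \<le> dist (x (r j)) p"
      by blast
    have xb: "norm ((x \<circ> r) j) \<le> norm x0 + d" for j
    proof -
      have "norm (x (r j)) \<le> norm (x (r j) - x0) + norm x0" using norm_triangle_ineq[of "x (r j) - x0" x0] by simp
      then show ?thesis using bnd[of "r j"] by simp
    qed
    obtain s y where s: "strict_mono s" and wc: "weak_conv ((x \<circ> r) \<circ> s) y"
      using weak_compact[of "x \<circ> r" "norm x0 + d"] xb by blast
    define w where "w j = x (r (s j))" for j
    have "weak_seq_cluster_point x y"
      unfolding weak_seq_cluster_point_def
      using wc strict_mono_o[OF r s] by (auto simp: o_assoc)
    then have yZ: "y \<in> Z" using H by blast
    have wl: "(\<lambda>j. inner (w j) v) \<longlonglongrightarrow> inner y v" for v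
    proof -
      have "(\<lambda>j. inner (((x \<circ> r) \<circ> s) j) v) \<longlonglongrightarrow> inner y v" using wc unfolding weak_conv_def by blast
      then show ?thesis unfolding w_def o_def .
    qed
    have wl2: "(\<lambda>j. inner (w j - x0) v) \<longlonglongrightarrow> inner (y - x0) v" for v
      unfolding inner_diff_left by (intro tendsto_diff wl tendsto_const)
    have wb: "norm (w j - x0) \<le> d" for j using bnd unfolding w_def by simp
    have "inner (y - x0) (y - x0) \<le> d * norm (y - x0)"
    proof (rule LIMSEQ_le_const2[OF wl2])
      show "\<exists>N. \<forall>j\<ge>N. inner (w j - x0) (y - x0) \<le> d * norm (y - x0)"
      proof (intro exI allI impI)
        fix j
        have "inner (w j - x0) (y - x0) \<le> norm (w j - x0) * norm (y - x0)" by (rule norm_cauchy_schwarz)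
        also have "\<dots> \<le> d * norm (y - x0)" using wb by (intro mult_right_mono) auto
        finally show "inner (w j - x0) (y - x0) \<le> d * norm (y - x0)" .
      qed
    qed
    then have "norm (y - x0) * norm (y - x0) \<le> d * norm (y - x0)"
      by (simp add: power2_norm_eq_inner[symmetric] power2_eq_square)
    then have "norm (y - x0) \<le> d"
      by (cases "norm (y - x0) = 0") (auto simp: d_def mult_le_cancel_right)
    then have "y = p" unfolding p_def
      by (intro proj_unique_min[OF Z yZ]) (simp add: d_def p_def norm_minus_commute)
    have eq: "norm (w j - p)^2 = norm (w j - x0)^2 - 2 * inner (p - x0) (w j - x0) + norm (p - x0)^2" for j
      using norm_diff_scale[of "w j - x0" 1 "p - x0"] by simp
    have le: "e^2 \<le> 2 * d^2 - 2 * inner (p - x0) (w j - x0)" for j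
    proof -
      have "e \<le> norm (w j - p)" using far[of "s j"] by (simp add: w_def dist_norm)
      then have "e^2 \<le> norm (w j - p)^2" using e by (intro power_mono) auto
      also have "\<dots> \<le> 2 * d^2 - 2 * inner (p - x0) (w j - x0)"
      proof -
        have "norm (w j - x0)^2 \<le> d^2" using wb[of j] by (simp add: power_mono)
        moreover have "norm (p - x0)^2 = d^2" by (simp add: d_def norm_minus_commute)
        ultimately show ?thesis using eq[of j] by linarith
      qed
      finally show ?thesis .
    qed
    have lim0: "(\<lambda>j. 2 * d^2 - 2 * inner (p - x0) (w j - x0)) \<longlonglongrightarrow> 2 * d^2 - 2 * inner (p - x0) (y - x0)"
    proof -
      have l: "(\<lambda>j. inner (p - x0) (w j - x0)) \<longlonglongrightarrow> inner (p - x0) (y - x0)"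
        using wl2[of "p - x0"] by (simp add: inner_commute)
      show ?thesis by (rule tendsto_diff[OF tendsto_const tendsto_mult_left[OF l]])
    qed
    have "2 * d^2 - 2 * inner (p - x0) (y - x0) = 0"
      using \<open>y = p\<close> by (simp add: d_def power2_norm_eq_inner norm_minus_commute)
    moreover have "e^2 \<le> 2 * d^2 - 2 * inner (p - x0) (y - x0)"
      by (rule LIMSEQ_le_const[OF lim0]) (use le in blast)
    ultimately have "e^2 \<le> 0" by simp
    then show False using e by simp
  qed
  show ?thesis using claim1 claim2 claim3 claim4 claim5 p_def by blast
qed

end
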